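(* Let $\mathcal{F}$ be a complete fan in $\mathbb{R}^d$ and $R_0$ a region of $\mathcal{F}$. Then $\mathcal{F}$ is inscribable if and only if $\mathcal{F}$ is virtually inscribable and there is $v_0\in\mathrm{InSpc}(\mathcal{F},R_0)$ such that for every region $R$ of $\mathcal{F}$ one has $t_{\mathcal{W}}(v_0)\in\operatorname{int}(R)$ for some path $\mathcal{W}$ in $G(\mathcal{F})$ from $R_0$ to $R$.
   Context: A fan is a nonempty collection of polyhedral cones closed under taking faces and intersections; it is complete if its union is $\mathbb{R}^d$. Regions are the inclusion-maximal cones; walls are cones of dimension $d-1$. All cones share a lineality space $\mathrm{lineal}(\mathcal{F})$. The dual graph $G(\mathcal{F})$ has the regions as nodes, with $R,R'$ adjacent if $R\cap R'$ is a wall; then $s_{RR'}$ denotes the orthogonal reflection in the hyperplane $\mathrm{lin}(R\cap R')$. For a walk $\mathcal{W}=R_0R_1\cdots R_k$ set $t_{\mathcal{W}}=s_{R_kR_{k-1}}\cdots s_{R_2R_1}s_{R_1R_0}$. The fan is virtually inscribable if there exists $v\in\mathbb{R}^d\setminus\mathrm{lineal}(\mathcal{F})$ with $t_{\mathcal{W}}(v)=v$ for all closed walks $\mathcal{W}$ starting at $R_0$. The based inscribed space $\mathrm{InSpc}(\mathcal{F},R_0)$ is the linear subspace of all $v\in\mathrm{lineal}(\mathcal{F})^\perp$ with $t_{\mathcal{W}}(v)=v$ for all closed walks $\mathcal{W}$ starting at $R_0$. The fan $\mathcal{F}$ is inscribable if there is an inscribed polytope (vertices on a common sphere) whose normal fan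 is $\mathcal{F}$. *)

theory Defs
  imports "HOL-Analysis.Analysis"
begin

definition polyhedral_cone :: "'a::euclidean_space set \<Rightarrow> bool" where
  "polyhedral_cone C \<longleftrightarrow> polyhedron C \<and> cone C \<and> C \<noteq> {}"

definition is_fan :: "'a::euclidean_space set set \<Rightarrow> bool" where
  "is_fan F \<longleftrightarrow> F \<noteq> {} \<and> finite F \<and> (\<forall>C\<in>F. polyhedral_cone C)
     \<and> (\<forall>C\<in>F. \<forall>G. G face_of C \<and> G \<noteq> {} \<longrightarrow> G \<in> F)
     \<and> (\<forall>C\<in>F. \<forall>D\<in>F. (C \<inter> D) face_of C \<and> (C \<inter> D) face_of D)"

definition complete_fan :: "'a::euclidean_space set set \<Rightarrow> bool" where
  "complete_fan F \<longleftrightarrow> is_fan F \<and> \<Union>F = UNIV"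

definition regions :: "'a::euclidean_space set set \<Rightarrow> 'a set set" where
  "regions F = {R \<in> F. \<forall>C\<in>F. R \<subseteq> C \<longrightarrow> C = R}"

definition is_wall :: "'a::euclidean_space set \<Rightarrow> bool" where
  "is_wall C \<longleftrightarrow> aff_dim C = int DIM('a) - 1"

definition lineality :: "'a::euclidean_space set \<Rightarrow> 'a set" where
  "lineality C = {x. x \<in> C \<and> - x \<in> C}"

definition lineal :: "'a::euclidean_space set set \<Rightarrow> 'a set" where
  "lineal F = (\<Inter>C\<in>F. lineality C)"

definition adjacent :: "'a::euclidean_space set set \<Rightarrow> 'a set \<Rightarrow> 'a set \<Rightarrow> bool" where
  "adjacent F R R' \<longleftrightarrow> R \<in> regions F \<and> R' \<in> regions F \<and> is_wall (R \<inter> R')"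

definition reflect :: "'a::euclidean_space set \<Rightarrow> 'a \<Rightarrow> 'a" where
  "reflect L x = (THE y. (1/2) *\<^sub>R (x + y) \<in> L \<and> (\<forall>z\<in>L. inner (x - y) z = 0))"

definition wall_reflection :: "'a::euclidean_space set \<Rightarrow> 'a set \<Rightarrow> 'a \<Rightarrow> 'a" where
  "wall_reflection R R' = reflect (span (R \<inter> R'))"

definition is_walk :: "'a::euclidean_space set set \<Rightarrow> 'a set list \<Rightarrow> bool" where
  "is_walk F W \<longleftrightarrow> W \<noteq> [] \<and> set W \<subseteq> regions F
     \<and> (\<forall>i. Suc i < length W \<longrightarrow> adjacent F (W ! i) (W ! Suc i))"

definition is_path :: "'a::euclidean_space set set \<Rightarrow> 'a set list \<Rightarrow> bool" where
  "is_path F W \<longleftrightarrow> is_walk F W \<and> distinct W"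

definition closed_walk_at :: "'a::euclidean_space set set \<Rightarrow> 'a set \<Rightarrow> 'a set list \<Rightarrow> bool" where
  "closed_walk_at F R0 W \<longleftrightarrow> is_walk F W \<and> hd W = R0 \<and> last W = R0"

text \<open>t_W = s_{R_k R_{k-1}} \<circ> ... \<circ> s_{R_2 R_1} \<circ> s_{R_1 R_0}.\<close>
fun walk_map :: "'a::euclidean_space set list \<Rightarrow> 'a \<Rightarrow> 'a" where
  "walk_map (R # R' # Rs) = walk_map (R' # Rs) \<circ> wall_reflection R' R"
| "walk_map _ = id"

definition virtually_inscribable :: "'a::euclidean_space set set \<Rightarrow> 'a set \<Rightarrow> bool" where
  "virtually_inscribable F R0 \<longleftrightarrow>
     (\<exists>v. v \<notin> lineal F \<and> (\<forall>W. closed_walk_at F R0 W \<longrightarrow> walk_map W v = v))"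

definition InSpc :: "'a::euclidean_space set set \<Rightarrow> 'a set \<Rightarrow> 'a set" where
  "InSpc F R0 = {v. v \<in> orthogonal_comp (lineal F)
                    \<and> (\<forall>W. closed_walk_at F R0 W \<longrightarrow> walk_map W v = v)}"

definition normal_cone :: "'a::euclidean_space set \<Rightarrow> 'a set \<Rightarrow> 'a set" where
  "normal_cone P G = {c. \<forall>x\<in>G. \<forall>y\<in>P. inner c y \<le> inner c x}"

definition normal_fan :: "'a::euclidean_space set \<Rightarrow> 'a set set" where
  "normal_fan P = {normal_cone P G | G. G face_of P \<and> G \<noteq> {}}"

definition inscribed_polytope :: "'a::euclidean_space set \<Rightarrow> bool" where
  "inscribed_polytope P \<longleftrightarrow> polytope P \<and>
     (\<exists>c r. {v. v extreme_point_of P} \<subseteq> sphere c r)"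

definition inscribable :: "'a::euclidean_space set set \<Rightarrow> bool" where
  "inscribable F \<longleftrightarrow> (\<exists>P. inscribed_polytope P \<and> normal_fan P = F)"

end

theory Submission
  imports Defs
begin

lemma reflect_unique:
  assumes L: "subspace L" and m: "(1/2) *\<^sub>R (x + y) \<in> L" and o: "\<forall>z\<in>L. inner (x - y) z = 0"
  shows "reflect L x = y"
  unfolding reflect_def
proof (rule the_equality)
  show "(1/2) *\<^sub>R (x + y) \<in> L \<and> (\<forall>z\<in>L. inner (x - y) z = 0)" using m o by blast
next
  fix y' assume h: "(1/2) *\<^sub>R (x + y') \<in> L \<and> (\<forall>z\<in>L. inner (x - y') z = 0)"
  have "(1/2) *\<^sub>R (x + y') - (1/2) *\<^sub>R (x + y) \<in> L"
    using h m L by (simp add: subspace_diff)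
  hence "2 *\<^sub>R ((1/2) *\<^sub>R (x + y') - (1/2) *\<^sub>R (x + y)) \<in> L"
    using L by (simp add: subspace_scale)
  hence d: "y' - y \<in> L" by (simp add: algebra_simps)
  have "inner (x - y') (y' - y) = 0" "inner (x - y) (y' - y) = 0" using h o d by auto
  hence "inner (y' - y) (y' - y) = 0" by (simp add: inner_diff_left)
  thus "y' = y" by simp
qed

lemma reflect_decomp:
  assumes L: "subspace L" and y: "y \<in> L" and z: "\<forall>w\<in>L. inner z w = 0"
  shows "reflect L (y + z) = y - z"
proof (rule reflect_unique[OF L])
  show "(1/2) *\<^sub>R (y + z + (y - z)) \<in> L" using y by (simp add: scaleR_2[symmetric])
  show "\<forall>w\<in>L. inner (y + z - (y - z)) w = 0" using z
    by (simp add: inner_add_left)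
qed

lemma reflect_props:
  assumes L: "subspace L"
  shows "reflect L (reflect L x) = x" "norm (reflect L x) = norm x"
proof -
  obtain y z where y: "y \<in> span L" and z: "\<And>w. w \<in> span L \<Longrightarrow> orthogonal z w" and x: "x = y + z"
    using orthogonal_subspace_decomp_exists by blast
  have yL: "y \<in> L" using y L by (metis span_eq_iff)
  have zL: "\<forall>w\<in>L. inner z w = 0"
  proof
    fix w assume "w \<in> L" hence "w \<in> span L" by (rule span_base)
    thus "inner z w = 0" using z orthogonal_def by blast
  qed
  have zL': "\<forall>w\<in>L. inner (- z) w = 0" using zL by simp
  have r: "reflect L x = y - z" using reflect_decomp[OF L yL zL] x by simp
  have "reflect L (y + (- z)) = y - (- z)" by (rule reflect_decomp[OF L yL zL'])
  thus "reflect L (reflect L x) = x" using r x by simp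
  have yz: "inner y z = 0" using zL yL by (simp add: inner_commute)
  have "norm (y - z) ^ 2 = norm (y + z) ^ 2"
    by (simp add: power2_norm_eq_inner inner_diff_left inner_diff_right inner_add_left inner_add_right yz inner_commute)
  thus "norm (reflect L x) = norm x" using r x by (simp add: power2_eq_iff_nonneg)
qed

lemma reflect_hyperplane:
  assumes a: "a \<noteq> 0"
  shows "reflect {x. inner a x = 0} v = v - (2 * inner a v / inner a a) *\<^sub>R a"
proof (rule reflect_unique)
  show "subspace {x. inner a x = 0}" by (rule subspace_hyperplane)
  have "inner a a \<noteq> 0" using a by simp
  thus "(1/2) *\<^sub>R (v + (v - (2 * inner a v / inner a a) *\<^sub>R a)) \<in> {x. inner a x = 0}"
    by (simp add: inner_add_right inner_diff_right field_simps)
  show "\<forall>z\<in>{x. inner a x = 0}. inner (v - (v - (2 * inner a v / inner a a) *\<^sub>R a)) z = 0"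
    by simp
qed

lemma wall_reflection_props:
  "wall_reflection R R' (wall_reflection R R' x) = x"
  "norm (wall_reflection R R' x) = norm x"
  "wall_reflection R R' = wall_reflection R' R"
  unfolding wall_reflection_def using reflect_props[OF subspace_span] by (auto simp: Int_commute)

lemma wall_reflection_invol2: "wall_reflection R R' (wall_reflection R' R x) = x"
proof -
  have "R' \<inter> R = R \<inter> R'" by blast
  thus ?thesis unfolding wall_reflection_def using reflect_props(1)[OF subspace_span] by simp
qed

lemma walk_map_append:
  "xs \<noteq> [] \<Longrightarrow> ys \<noteq> [] \<Longrightarrow> last xs = hd ys \<Longrightarrow> walk_map (xs @ tl ys) = walk_map ys \<circ> walk_map xs"
proof (induction xs)
  case Nil then show ?case by simp
next
  case (Cons a xs)
  note IH = Cons.IH and prems = Cons.prems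
  show ?case
  proof (cases xs)
    case Nil
    then show ?thesis using Cons.prems by (cases ys) auto
  next
    case (Cons b xs')
    have "xs \<noteq> []" "last xs = hd ys" using prems Cons by auto
    hence IH': "walk_map (xs @ tl ys) = walk_map ys \<circ> walk_map xs"
      using IH prems(2) by blast
    have "walk_map ((a # xs) @ tl ys) = walk_map (xs @ tl ys) \<circ> wall_reflection b a"
      using Cons by simp
    also have "\<dots> = walk_map ys \<circ> (walk_map xs \<circ> wall_reflection b a)"
      by (simp add: IH' comp_assoc)
    also have "walk_map xs \<circ> wall_reflection b a = walk_map (a # xs)"
      using Cons by simp
    finally show ?thesis .
  qed
qed

lemma walk_map_rev: "walk_map (rev W) \<circ> walk_map W = id"
proof (induction W rule: induct_list012)
  case (3 R R' Rs)
  have "walk_map (rev (R # R' # Rs)) = walk_map (rev (R' # Rs) @ tl [R', R])"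
    by simp
  also have "\<dots> = walk_map [R', R] \<circ> walk_map (rev (R' # Rs))"
    by (rule walk_map_append) auto
  finally have e: "walk_map (rev (R # R' # Rs)) = wall_reflection R R' \<circ> walk_map (rev (R' # Rs))"
    by simp
  have e': "walk_map (rev (R # R' # Rs)) y = wall_reflection R R' (walk_map (rev (R' # Rs)) y)" for y
    using e by (metis comp_apply)
  have ih: "walk_map (rev (R' # Rs)) (walk_map (R' # Rs) y) = y" for y
    using 3 by (metis comp_apply id_apply)
  show ?case
  proof (rule ext)
    fix x
    have "(walk_map (rev (R # R' # Rs)) \<circ> walk_map (R # R' # Rs)) x
        = walk_map (rev (R # R' # Rs)) (walk_map (R' # Rs) (wall_reflection R' R x))"
      by (simp only: comp_apply walk_map.simps(1))
    also have "\<dots> = wall_reflection R R' (wall_reflection R' R x)" by (simp only: e' ih)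
    also have "\<dots> = x" by (rule wall_reflection_invol2)
    finally show "(walk_map (rev (R # R' # Rs)) \<circ> walk_map (R # R' # Rs)) x = id x" by simp
  qed
qed simp_all

lemma walk_map_norm: "norm (walk_map W x) = norm x"
  by (induction W arbitrary: x rule: induct_list012) (auto simp: wall_reflection_props(2))

lemma is_walk_single: "is_walk F [a] \<longleftrightarrow> a \<in> regions F"
  by (simp add: is_walk_def)

lemma is_walk_cons2: "is_walk F (a # b # rest) \<longleftrightarrow> adjacent F a b \<and> is_walk F (b # rest)"
proof
  assume h: "is_walk F (a # b # rest)"
  have A: "\<forall>i. Suc i < length (a # b # rest) \<longrightarrow> adjacent F ((a # b # rest) ! i) ((a # b # rest) ! Suc i)"
    and S: "set (a # b # rest) \<subseteq> regions F"
    using h unfolding is_walk_def by blast+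
  have "adjacent F a b" using A[rule_format, of 0] by simp
  moreover have "is_walk F (b # rest)" unfolding is_walk_def
  proof (intro conjI allI impI)
    fix i assume "Suc i < length (b # rest)" 
    hence "Suc (Suc i) < length (a # b # rest)" by simp
    hence "adjacent F ((a # b # rest) ! Suc i) ((a # b # rest) ! Suc (Suc i))"
      using A by blast
    thus "adjacent F ((b # rest) ! i) ((b # rest) ! Suc i)" by simp
  next
    show "set (b # rest) \<subseteq> regions F" using S by simp
  qed simp
  ultimately show "adjacent F a b \<and> is_walk F (b # rest)" by blast
next
  assume h: "adjacent F a b \<and> is_walk F (b # rest)"
  have A: "\<forall>i. Suc i < length (b # rest) \<longrightarrow> adjacent F ((b # rest) ! i) ((b # rest) ! Suc i)"
    and S: "set (b # rest) \<subseteq> regions F"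
    using h unfolding is_walk_def by blast+
  show "is_walk F (a # b # rest)" unfolding is_walk_def
  proof (intro conjI allI impI)
    show "set (a # b # rest) \<subseteq> regions F" using h S by (simp add: adjacent_def)
    fix i assume i: "Suc i < length (a # b # rest)"
    show "adjacent F ((a # b # rest) ! i) ((a # b # rest) ! Suc i)"
    proof (cases i)
      case 0 then show ?thesis using h by simp
    next
      case (Suc j)
      then have "Suc j < length (b # rest)" using i by simp
      then have "adjacent F ((b # rest) ! j) ((b # rest) ! Suc j)" using A by blast
      then show ?thesis using Suc by simp
    qed
  qed simp
qed

lemma adjacent_sym: "adjacent F a b \<Longrightarrow> adjacent F b a"
  by (auto simp: adjacent_def Int_commute)

lemma is_walk_append:
  "is_walk F xs \<Longrightarrow> is_walk F ys \<Longrightarrow> last xs = hd ys \<Longrightarrow> is_walk F (xs @ tl ys)"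
proof (induction xs rule: induct_list012)
  case (3 R R' Rs)
  have "is_walk F ((R' # Rs) @ tl ys)"
    using 3 by (intro "3"(2)) (auto simp: is_walk_cons2)
  then show ?case using "3.prems" by (simp add: is_walk_cons2)
next
  case (2 v)
  have "ys \<noteq> []" using 2 by (simp add: is_walk_def)
  hence "[v] @ tl ys = ys" using 2 by (cases ys) simp_all
  then show ?case using 2 by simp
next
  case 1 then show ?case by (simp add: is_walk_def)
qed

lemma is_walk_rev: "is_walk F W \<Longrightarrow> is_walk F (rev W)"
proof (induction W rule: induct_list012)
  case (3 R R' Rs)
  have "is_walk F (rev (R' # Rs))" using 3 by (simp add: is_walk_cons2)
  moreover have "is_walk F [R', R]" using 3 by (simp add: is_walk_cons2 is_walk_single adjacent_def Int_commute)
  ultimately have "is_walk F (rev (R' # Rs) @ tl [R', R])"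
    by (intro is_walk_append) auto
  then show ?case by simp
qed (simp_all add: is_walk_def)

lemma fan_facts:
  assumes "complete_fan F" "C \<in> F"
  shows "convex C" "closed C" "cone C" "0 \<in> C" "polyhedron C"
proof -
  have "polyhedral_cone C" using assms unfolding complete_fan_def is_fan_def by blast
  hence p: "polyhedron C" "cone C" "C \<noteq> {}" unfolding polyhedral_cone_def by blast+
  show "convex C" "closed C" "cone C" "0 \<in> C" "polyhedron C"
    using p polyhedron_imp_convex polyhedron_imp_closed cone_contains_0 by blast+
qed

lemma fan_finite: "complete_fan F \<Longrightarrow> finite F"
  by (simp add: complete_fan_def is_fan_def)

lemma regions_sub: "regions F \<subseteq> F"
  by (auto simp: regions_def)

lemma finite_regions: "complete_fan F \<Longrightarrow> finite (regions F)"
  using fan_finite regions_sub finite_subset by blast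

lemma fan_face: "complete_fan F \<Longrightarrow> C \<in> F \<Longrightarrow> D \<in> F \<Longrightarrow> (C \<inter> D) face_of C"
  by (simp add: complete_fan_def is_fan_def)

lemma fan_face_mem: "complete_fan F \<Longrightarrow> C \<in> F \<Longrightarrow> G face_of C \<Longrightarrow> G \<noteq> {} \<Longrightarrow> G \<in> F"
  by (simp add: complete_fan_def is_fan_def)

lemma fan_Int: assumes "complete_fan F" "C \<in> F" "D \<in> F" shows "C \<inter> D \<in> F"
proof -
  have "0 \<in> C \<inter> D" using fan_facts(4) assms by blast
  thus ?thesis using fan_face_mem[OF assms(1,2) fan_face[OF assms]] by blast
qed

lemma region_max: "R \<in> regions F \<Longrightarrow> C \<in> F \<Longrightarrow> R \<subseteq> C \<Longrightarrow> C = R"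
  by (auto simp: regions_def)

lemma in_some_region:
  assumes F: "complete_fan F"
  shows "\<exists>R\<in>regions F. x \<in> R"
proof -
  have "x \<in> \<Union>F" using F by (simp add: complete_fan_def)
  then obtain C where C: "C \<in> F" "x \<in> C" by blast
  let ?A = "{D \<in> F. C \<subseteq> D}"
  have fin: "finite ?A" using fan_finite[OF F] by simp
  have ne: "?A \<noteq> {}" using C by blast
  obtain D where D: "D \<in> ?A" "\<forall>E\<in>?A. D \<le> E \<longrightarrow> D = E"
    using finite_has_maximal[OF fin ne] by (elim bexE) simp
  have "D \<in> regions F" unfolding regions_def
  proof (intro CollectI conjI ballI impI)
    show "D \<in> F" using D by simp
    fix E assume "E \<in> F" "D \<subseteq> E"
    hence "E \<in> ?A" using D by auto
    thus "E = D" using D \<open>D \<subseteq> E\<close> by metis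
  qed
  thus ?thesis using D C by blast
qed

lemma local_regions:
  assumes F: "complete_fan F"
  shows "\<exists>e>0. \<forall>y\<in>ball x e. \<forall>Q\<in>regions F. y \<in> Q \<longrightarrow> x \<in> Q"
proof -
  let ?U = "\<Union>{Q \<in> regions F. x \<notin> Q}"
  have "closed ?U"
    using finite_regions[OF F] fan_facts(2)[OF F] regions_sub by (intro closed_Union) auto
  hence o: "open (- ?U)" by (rule open_Compl)
  have "x \<in> - ?U" by blast
  then obtain e where "e > 0" "ball x e \<subseteq> - ?U"
    using o open_contains_ball[of "- ?U"] by blast
  thus ?thesis by blast
qed

lemma region_interior:
  assumes F: "complete_fan F" and R: "R \<in> regions F"
  shows "interior R \<noteq> {}"
proof -
  have RF: "R \<in> F" using R regions_sub by blast
  have "R \<noteq> {}" using fan_facts(4)[OF F RF] by blast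
  then obtain x where x: "x \<in> rel_interior R"
    using rel_interior_eq_empty fan_facts(1)[OF F RF] by blast
  obtain e where e: "e > 0" "\<forall>y\<in>ball x e. \<forall>Q\<in>regions F. y \<in> Q \<longrightarrow> x \<in> Q"
    using local_regions[OF F] by blast
  have "ball x e \<subseteq> R"
  proof
    fix y assume y: "y \<in> ball x e"
    obtain Q where Q: "Q \<in> regions F" "y \<in> Q" using in_some_region[OF F] by blast
    have xQ: "x \<in> Q" using e y Q by blast
    have QF: "Q \<in> F" using Q regions_sub by blast
    have "R \<subseteq> R \<inter> Q"
      using subset_of_face_of[OF fan_face[OF F RF QF], of R] x xQ rel_interior_subset by blast
    hence "Q = R" using region_max[OF R QF] by blast
    thus "y \<in> R" using Q by blast
  qed
  hence "x \<in> interior R" using e(1) by (meson mem_interior)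
  thus ?thesis by blast
qed

lemma region_aff_dim:
  fixes R :: "'a::euclidean_space set"
  assumes "complete_fan F" "R \<in> regions F"
  shows "aff_dim R = int DIM('a)"
  by (rule aff_dim_nonempty_interior) (rule region_interior[OF assms])

lemma region_interior_disj:
  assumes F: "complete_fan F" and R: "R \<in> regions F" and S: "S \<in> regions F" and ne: "R \<noteq> S"
  shows "interior R \<inter> S = {}"
proof (rule ccontr)
  assume "interior R \<inter> S \<noteq> {}"
  then obtain x where x: "x \<in> interior R" "x \<in> S" by blast
  have RF: "R \<in> F" and SF: "S \<in> F" using R S regions_sub by auto
  have "x \<in> rel_interior R" using x interior_subset_rel_interior by blast
  hence "R \<subseteq> R \<inter> S"
    using subset_of_face_of[OF fan_face[OF F RF SF], of R] x interior_subset by blast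
  hence "S = R" using region_max[OF R SF] by blast
  thus False using ne by simp
qed

lemma adjacent_neq:
  fixes Q :: "'a::euclidean_space set"
  assumes F: "complete_fan F" and adj: "adjacent F Q Q'"
  shows "Q \<noteq> Q'"
proof
  assume "Q = Q'"
  hence "aff_dim Q = int DIM('a) - 1" using adj by (simp add: adjacent_def is_wall_def)
  moreover have "Q \<in> regions F" using adj by (simp add: adjacent_def)
  hence "aff_dim Q = int DIM('a)" using region_aff_dim[OF F] by blast
  ultimately show False by simp
qed

lemma span_hyperplane:
  fixes S :: "'a::euclidean_space set"
  assumes "0 \<in> S" "aff_dim S = int DIM('a) - 1" "a \<noteq> 0" "S \<subseteq> {x. inner a x = 0}"
  shows "span S = {x. inner a x = 0}"
proof -
  have "aff_dim S = int (dim ((+) (- 0) ` S))"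
    by (rule aff_dim_eq_dim) (simp add: assms(1) hull_inc)
  moreover have "(+) (- 0) ` S = S" by simp
  ultimately have "int (dim S) = int DIM('a) - 1" using assms(2) by simp
  hence dS: "dim S = DIM('a) - 1" by linarith
  have dH: "dim {x. inner a x = 0} = DIM('a) - 1" by (rule dim_hyperplane[OF assms(3)])
  have sub: "span S \<subseteq> {x. inner a x = 0}" by (rule span_minimal[OF assms(4) subspace_hyperplane])
  have le: "dim {x. inner a x = 0} \<le> dim (span S)" unfolding dim_span using dS dH by linarith
  show ?thesis
    by (rule subspace_dim_equal[OF subspace_span subspace_hyperplane sub le])
qed

lemma cone_face_0:
  assumes "cone Q" "C face_of Q" "C \<noteq> {}"
  shows "0 \<in> C"
proof -
  obtain p where p: "p \<in> C" using assms(3) by blast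
  show ?thesis
  proof (cases "p = 0")
    case True then show ?thesis using p by simp
  next
    case False
    have pQ: "p \<in> Q" using p assms(2) face_of_imp_subset by blast
    have z: "0 \<in> Q" using assms(1) pQ cone_contains_0 by blast
    have t: "2 *\<^sub>R p \<in> Q" using assms(1) pQ unfolding cone_def by simp
    have "(1 - 1/2) *\<^sub>R 0 + (1/2) *\<^sub>R (2 *\<^sub>R p) = p" by simp
    hence sg: "p \<in> open_segment 0 (2 *\<^sub>R p)"
      unfolding in_segment(2) using False
      by (intro conjI exI[of _ "1/2"]) simp_all
    show ?thesis using face_ofD[OF assms(2) sg z t p] by (rule conjunct1)
  qed
qed

lemma facet_step:
  fixes Q :: "'a::euclidean_space set"
  assumes F: "complete_fan F" and Q: "Q \<in> regions F" and x: "x \<notin> Q"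
  shows "\<exists>Q' a. adjacent F Q Q' \<and> a \<noteq> 0 \<and> span (Q' \<inter> Q) = {y. inner a y = 0}
              \<and> Q \<subseteq> {y. inner a y \<le> 0} \<and> inner a x > 0"
proof -
  have QF: "Q \<in> F" using Q regions_sub by blast
  have polyQ: "polyhedron Q" and convQ: "convex Q" and coneQ: "cone Q"
    using fan_facts[OF F QF] by auto
  obtain FF where finFF: "finite FF" and seq: "Q = affine hull Q \<inter> \<Inter>FF"
             and faces: "\<And>h. h \<in> FF \<Longrightarrow> \<exists>a b. a \<noteq> 0 \<and> h = {x. a \<bullet> x \<le> b}"
             and min: "\<And>F'. F' \<subset> FF \<Longrightarrow> Q \<subset> (affine hull Q) \<inter> \<Inter>F'"
    using polyQ by (simp add: polyhedron_Int_affine_minimal) meson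
  then obtain a b where ab: "\<And>h. h \<in> FF \<Longrightarrow> a h \<noteq> 0 \<and> h = {x. a h \<bullet> x \<le> b h}"
    by metis
  have adQ: "aff_dim Q = int DIM('a)" by (rule region_aff_dim[OF F Q])
  hence ahQ: "affine hull Q = UNIV" using aff_dim_eq_full[of Q] by simp
  have Qeq: "Q = \<Inter>FF" using seq ahQ by simp
  then obtain h where h: "h \<in> FF" "x \<notin> h" using x by blast
  have "(Q \<inter> {y. a h \<bullet> y = b h}) facet_of Q"
    using facet_of_polyhedron_explicit[OF finFF seq ab min] h(1) by blast
  hence Cface0: "(Q \<inter> {y. a h \<bullet> y = b h}) face_of Q" and Cne0: "Q \<inter> {y. a h \<bullet> y = b h} \<noteq> {}"
    and Cdim0: "aff_dim (Q \<inter> {y. a h \<bullet> y = b h}) = aff_dim Q - 1"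
    unfolding facet_of_def by blast+
  have "0 \<in> Q \<inter> {y. a h \<bullet> y = b h}" by (rule cone_face_0[OF coneQ Cface0 Cne0])
  hence b0: "b h = 0" by simp
  define aa where "aa = a h"
  have aa0: "aa \<noteq> 0" using ab[OF h(1)] by (simp add: aa_def)
  have hEq: "h = {y. aa \<bullet> y \<le> 0}" using ab[OF h(1)] b0 by (simp add: aa_def)
  have Qsub: "Q \<subseteq> {y. aa \<bullet> y \<le> 0}" using Qeq h(1) hEq by blast
  have ax: "aa \<bullet> x > 0" using h(2) hEq by simp
  define C where "C = Q \<inter> {y. aa \<bullet> y = 0}"
  have Cface: "C face_of Q" using Cface0 b0 by (simp add: C_def aa_def)
  have Cne: "C \<noteq> {}" using Cne0 b0 by (simp add: C_def aa_def)
  have Cdim: "aff_dim C = int DIM('a) - 1" using Cdim0 b0 adQ by (simp add: C_def aa_def)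
  have C0: "0 \<in> C" by (simp add: C_def fan_facts(4)[OF F QF])
  have Chyp: "C \<subseteq> {y. aa \<bullet> y = 0}" by (simp add: C_def)
  have CF: "C \<in> F" by (rule fan_face_mem[OF F QF Cface Cne])
  have convC: "convex C" using Cface face_of_imp_convex by blast
  obtain p where p: "p \<in> rel_interior C" using rel_interior_eq_empty convC Cne by blast
  have pC: "p \<in> C" using p rel_interior_subset by blast
  have pQ: "p \<in> Q" using pC C_def by simp
  have ap: "aa \<bullet> p = 0" using pC C_def by simp
  obtain e where e: "e > 0" "\<forall>y\<in>ball p e. \<forall>Q\<in>regions F. y \<in> Q \<longrightarrow> p \<in> Q"
    using local_regions[OF F] by blast
  define y where "y = p + (e / 2 / norm aa) *\<^sub>R aa"
  have na: "norm aa > 0" using aa0 by simp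
  have "norm ((e / 2 / norm aa) *\<^sub>R aa) = e / 2" using na e(1) by simp
  hence "dist p y = e / 2" by (simp add: y_def dist_norm)
  hence yb: "y \<in> ball p e" using e(1) by simp
  obtain Q' where Q': "Q' \<in> regions F" "y \<in> Q'" using in_some_region[OF F] by blast
  have Q'F: "Q' \<in> F" using Q' regions_sub by blast
  have pQ': "p \<in> Q'" using e(2) yb Q' by blast
  have "aa \<bullet> y = (e / 2 / norm aa) * (aa \<bullet> aa)" by (simp add: y_def inner_add_right ap)
  moreover have "(e / 2 / norm aa) * (aa \<bullet> aa) > 0" using na e(1) aa0 by simp
  ultimately have ay: "aa \<bullet> y > 0" by simp
  hence yQ: "y \<notin> Q" using Qsub by force
  have Tface: "(Q \<inter> Q') face_of Q" by (rule fan_face[OF F QF Q'F])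
  have "(Q \<inter> Q') \<inter> rel_interior C \<noteq> {}" using p pQ pQ' by blast
  hence CT: "C \<subseteq> Q \<inter> Q'" using subset_of_face_of[OF Tface _] Cface face_of_imp_subset by blast
  have TQ: "Q \<inter> Q' \<noteq> Q"
  proof
    assume "Q \<inter> Q' = Q"
    hence "Q \<subseteq> Q'" by blast
    hence "Q' = Q" by (rule region_max[OF Q Q'F])
    thus False using yQ Q' by simp
  qed
  have convT: "convex (Q \<inter> Q')" using Tface face_of_imp_convex by blast
  have lt: "aff_dim (Q \<inter> Q') < aff_dim Q" by (rule face_of_aff_dim_lt[OF convQ Tface TQ])
  have le: "aff_dim C \<le> aff_dim (Q \<inter> Q')" by (rule aff_dim_subset[OF CT])
  have CfT: "C face_of (Q \<inter> Q')" by (rule face_of_subset[OF Cface CT]) blast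
  have CeqT: "C = Q \<inter> Q'"
  proof (rule ccontr)
    assume "C \<noteq> Q \<inter> Q'"
    hence "aff_dim C < aff_dim (Q \<inter> Q')" by (rule face_of_aff_dim_lt[OF convT CfT])
    thus False using lt Cdim adQ by simp
  qed
  have adj: "adjacent F Q Q'"
    unfolding adjacent_def is_wall_def using Q Q' CeqT Cdim by simp
  have "Q' \<inter> Q = C" using CeqT by blast
  hence sp: "span (Q' \<inter> Q) = {y. aa \<bullet> y = 0}" using span_hyperplane[OF C0 Cdim aa0 Chyp] by simp
  show ?thesis using adj aa0 sp Qsub ax by blast
qed

lemma interior_halfspace_neg:
  assumes w: "w \<in> interior Q" and a0: "a \<noteq> 0" and Qs: "Q \<subseteq> {y. inner a y \<le> 0}"
  shows "inner a w < 0"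
proof -
  obtain e where e: "e > 0" "ball w e \<subseteq> Q" using w mem_interior by blast
  define z where "z = w + (e / 2 / norm a) *\<^sub>R a"
  have na: "norm a > 0" using a0 by simp
  have "norm ((e / 2 / norm a) *\<^sub>R a) = e / 2" using na e(1) by simp
  hence "dist w z = e / 2" by (simp add: z_def dist_norm)
  hence "z \<in> ball w e" using e(1) by simp
  hence "inner a z \<le> 0" using e(2) Qs by blast
  moreover have "inner a z = inner a w + (e / 2 / norm a) * (a \<bullet> a)" by (simp add: z_def inner_add_right)
  moreover have "(e / 2 / norm a) * (a \<bullet> a) > 0" using na e(1) a0 by simp
  ultimately show ?thesis by linarith
qed

lemma step_increase:
  fixes Q :: "'a::euclidean_space set"
  assumes F: "complete_fan F" and Q: "Q \<in> regions F" and x: "x \<notin> Q" and w: "w \<in> interior Q"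
  shows "\<exists>Q'. adjacent F Q Q' \<and> inner (wall_reflection Q' Q w) x > inner w x"
proof -
  obtain Q' a where adj: "adjacent F Q Q'" and a0: "a \<noteq> 0" and sp: "span (Q' \<inter> Q) = {y. inner a y = 0}"
    and Qs: "Q \<subseteq> {y. inner a y \<le> 0}" and ax: "inner a x > 0"
    using facet_step[OF F Q x] by blast
  have wr: "wall_reflection Q' Q w = w - (2 * inner a w / inner a a) *\<^sub>R a"
    unfolding wall_reflection_def sp by (rule reflect_hyperplane[OF a0])
  have aw: "inner a w < 0" by (rule interior_halfspace_neg[OF w a0 Qs])
  have aa: "inner a a > 0" using a0 by simp
  have c: "2 * inner a w / inner a a < 0" using aw aa by (simp add: divide_neg_pos)
  have "(2 * inner a w / inner a a) * inner a x < 0" by (rule mult_neg_pos[OF c ax])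
  moreover have "inner (wall_reflection Q' Q w) x = inner w x - (2 * inner a w / inner a a) * inner a x"
    by (simp add: wr inner_diff_left)
  ultimately show ?thesis using adj by auto
qed

definition good_w :: "'a::euclidean_space set set \<Rightarrow> ('a set \<Rightarrow> 'a) \<Rightarrow> bool" where
  "good_w F w \<longleftrightarrow> (\<forall>Q\<in>regions F. w Q \<in> interior Q)
      \<and> (\<forall>Q Q'. adjacent F Q Q' \<longrightarrow> wall_reflection Q' Q (w Q) = w Q')"

lemma max_interior:
  fixes R :: "'a::euclidean_space set"
  assumes F: "complete_fan F" and g: "good_w F w" and R: "R \<in> regions F" and x: "x \<in> interior R"
  shows "\<forall>S\<in>regions F. inner (w S) x \<le> inner (w R) x"
proof -
  let ?f = "\<lambda>S. inner (w S) x"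
  let ?A = "regions F"
  have fin: "finite (?f ` ?A)" using finite_regions[OF F] by simp
  have ne: "?f ` ?A \<noteq> {}" using R by blast
  obtain S0 where S0: "S0 \<in> ?A" "?f S0 = Max (?f ` ?A)" using Max_in[OF fin ne] by auto
  have mx: "\<forall>S\<in>?A. ?f S \<le> ?f S0" using S0(2) Max_ge[OF fin] by simp
  have xS0: "x \<in> S0"
  proof (rule ccontr)
    assume "x \<notin> S0"
    moreover have "w S0 \<in> interior S0" using g S0(1) by (simp add: good_w_def)
    ultimately obtain Q' where adj: "adjacent F S0 Q'" and gt: "inner (wall_reflection Q' S0 (w S0)) x > ?f S0"
      using step_increase[OF F S0(1)] by blast
    have "wall_reflection Q' S0 (w S0) = w Q'" using g adj by (simp add: good_w_def)
    moreover have "Q' \<in> ?A" using adj by (simp add: adjacent_def)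
    ultimately show False using gt mx by fastforce
  qed
  have "S0 = R"
  proof (rule ccontr)
    assume "S0 \<noteq> R"
    hence "interior R \<inter> S0 = {}" using region_interior_disj[OF F R S0(1)] by metis
    thus False using x xS0 by blast
  qed
  thus ?thesis using mx by simp
qed

lemma max_lemma:
  fixes R :: "'a::euclidean_space set"
  assumes F: "complete_fan F" and g: "good_w F w" and R: "R \<in> regions F" and x: "x \<in> R"
    and S: "S \<in> regions F"
  shows "inner (w S) x \<le> inner (w R) x"
proof -
  have RF: "R \<in> F" using R regions_sub by blast
  let ?K = "{x. inner (w S - w R) x \<le> 0}"
  have cK: "closed ?K" by (rule closed_halfspace_le)
  have "interior R \<subseteq> ?K"
  proof
    fix y assume "y \<in> interior R"
    hence "inner (w S) y \<le> inner (w R) y" using max_interior[OF F g R] S by blast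
    thus "y \<in> ?K" by (simp add: inner_diff_left)
  qed
  hence "closure (interior R) \<subseteq> ?K" using cK closure_minimal by blast
  moreover have "closure (interior R) = R"
    using convex_closure_interior[OF fan_facts(1)[OF F RF] region_interior[OF F R]]
      closure_closed[OF fan_facts(2)[OF F RF]] by simp
  ultimately have "x \<in> ?K" using x by blast
  thus ?thesis by (simp add: inner_diff_left)
qed

lemma walk_good:
  assumes g: "good_w F w"
  shows "is_walk F W \<Longrightarrow> walk_map W (w (hd W)) = w (last W)"
proof (induction W rule: induct_list012)
  case (3 R R' Rs)
  have adj: "adjacent F R R'" and wk: "is_walk F (R' # Rs)" using "3.prems" by (simp_all add: is_walk_cons2)
  have "walk_map (R # R' # Rs) (w R) = walk_map (R' # Rs) (wall_reflection R' R (w R))" by simp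
  also have "wall_reflection R' R (w R) = w R'" using g adj by (simp add: good_w_def)
  also have "walk_map (R' # Rs) (w R') = w (last (R' # Rs))" using "3"(2) wk by simp
  finally show ?case by simp
qed (simp_all add: is_walk_def)

lemma path_lemma:
  fixes R :: "'a::euclidean_space set"
  assumes F: "complete_fan F" and g: "good_w F w" and R: "R \<in> regions F" and Q: "Q \<in> regions F"
  shows "\<exists>W. is_path F W \<and> hd W = Q \<and> last W = R"
proof -
  obtain u where u: "u \<in> interior R" using region_interior[OF F R] by blast
  let ?f = "\<lambda>S. inner (w S) u"
  have main: "\<And>Q. Q \<in> regions F \<Longrightarrow> card {S \<in> regions F. ?f S > ?f Q} = n \<Longrightarrow>
     \<exists>W. is_walk F W \<and> distinct W \<and> hd W = Q \<and> last W = R \<and> (\<forall>S\<in>set W. ?f Q \<le> ?f S)" for n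
  proof (induction n rule: less_induct)
    case (less n Q)
    show ?case
    proof (cases "Q = R")
      case True
      then show ?thesis using R by (intro exI[of _ "[R]"]) (simp add: is_walk_single)
    next
      case False
      have "interior R \<inter> Q = {}" using region_interior_disj[OF F R less.prems(1)] False by metis
      hence uQ: "u \<notin> Q" using u by blast
      have wQ: "w Q \<in> interior Q" using g less.prems(1) by (simp add: good_w_def)
      obtain Q' where adj: "adjacent F Q Q'" and gt: "inner (wall_reflection Q' Q (w Q)) u > ?f Q"
        using step_increase[OF F less.prems(1) uQ wQ] by blast
      have "wall_reflection Q' Q (w Q) = w Q'" using g adj by (simp add: good_w_def)
      hence gt': "?f Q' > ?f Q" using gt by simp
      have Q': "Q' \<in> regions F" using adj by (simp add: adjacent_def)
      have sub: "{S \<in> regions F. ?f S > ?f Q'} \<subset> {S \<in> regions F. ?f S > ?f Q}"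
        using gt' Q' by auto
      have "card {S \<in> regions F. ?f S > ?f Q'} < card {S \<in> regions F. ?f S > ?f Q}"
        by (rule psubset_card_mono[OF _ sub]) (simp add: finite_regions[OF F])
      then obtain W' where W': "is_walk F W'" "distinct W'" "hd W' = Q'" "last W' = R"
          "\<forall>S\<in>set W'. ?f Q' \<le> ?f S"
        using less.IH less.prems(2) Q' by blast
      have W'ne: "W' \<noteq> []" using W'(1) by (simp add: is_walk_def)
      then obtain rest where Wr: "W' = Q' # rest" using W'(3) by (cases W') auto
      have "is_walk F (Q # W')" using adj W'(1) Wr by (simp add: is_walk_cons2)
      moreover have "distinct (Q # W')" using W'(2,5) gt' by auto
      moreover have "\<forall>S\<in>set (Q # W'). ?f Q \<le> ?f S" using W'(5) gt' by auto
      ultimately show ?thesis using W'(4) W'ne by (intro exI[of _ "Q # W'"]) simp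
    qed
  qed
  obtain W where "is_walk F W" "distinct W" "hd W = Q" "last W = R"
    using main[OF Q refl] by blast
  thus ?thesis unfolding is_path_def by blast
qed

lemma lineal_UNIV:
  fixes R :: "'a::euclidean_space set"
  assumes F: "complete_fan F" and R: "R \<in> regions F" and z: "0 \<in> interior R"
  shows "lineal F = UNIV"
proof -
  have RF: "R \<in> F" using R regions_sub by blast
  obtain e where e: "e > 0" "ball 0 e \<subseteq> R" using z mem_interior by blast
  have RU: "R = UNIV"
  proof (intro set_eqI iffI)
    fix v :: 'a
    show "v \<in> R"
    proof (cases "v = 0")
      case True then show ?thesis using fan_facts(4)[OF F RF] by simp
    next
      case False
      hence nv: "norm v > 0" by simp
      have "norm ((e / 2 / norm v) *\<^sub>R v) = e / 2" using nv e(1) by simp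
      hence "(e / 2 / norm v) *\<^sub>R v \<in> ball 0 e" using e(1) by simp
      hence sR: "(e / 2 / norm v) *\<^sub>R v \<in> R" using e(2) by blast
      have cR: "\<And>y c. y \<in> R \<Longrightarrow> c \<ge> 0 \<Longrightarrow> c *\<^sub>R y \<in> R"
        using fan_facts(3)[OF F RF] unfolding cone_def by blast
      have "(2 * norm v / e) *\<^sub>R ((e / 2 / norm v) *\<^sub>R v) \<in> R"
        by (rule cR[OF sR]) (use nv e(1) in simp)
      moreover have "(2 * norm v / e) *\<^sub>R ((e / 2 / norm v) *\<^sub>R v) = v" using nv e(1) by simp
      ultimately show ?thesis by simp
    qed
  qed simp
  have "\<forall>C\<in>F. C = UNIV"
  proof
    fix C assume CF: "C \<in> F"
    have "(R \<inter> C) face_of R" by (rule fan_face[OF F RF CF])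
    hence "C face_of UNIV" using RU by simp
    hence "C = {} \<or> C = UNIV" using face_of_affine_trivial[OF affine_UNIV] by blast
    thus "C = UNIV" using fan_facts(4)[OF F CF] by blast
  qed
  thus ?thesis unfolding lineal_def lineality_def by auto
qed

lemma nc_vertex:
  assumes PV: "P = convex hull V" and v: "v \<in> P"
  shows "c \<in> normal_cone P {v} \<longleftrightarrow> (\<forall>u\<in>V. inner c u \<le> inner c v)"
proof
  assume "c \<in> normal_cone P {v}"
  moreover have "V \<subseteq> P" unfolding PV by (rule hull_subset)
  ultimately show "\<forall>u\<in>V. inner c u \<le> inner c v" unfolding normal_cone_def by blast
next
  assume h: "\<forall>u\<in>V. inner c u \<le> inner c v"
  have "convex hull V \<subseteq> {y. inner c y \<le> inner c v}"
    by (rule hull_minimal) (use h convex_halfspace_le in auto)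
  thus "c \<in> normal_cone P {v}" unfolding normal_cone_def PV by blast
qed

lemma convex_K: "convex {x. \<forall>y\<in>P. inner c y \<le> inner c x}"
proof -
  have eq: "{x. \<forall>y\<in>P. inner c y \<le> inner c x} = (\<Inter>y\<in>P. {x. inner c x \<ge> inner c y})" by auto
  show ?thesis unfolding eq by (rule convex_INT) (rule convex_halfspace_ge)
qed

lemma convex_normal_cone: "convex (normal_cone P {v})"
proof -
  have eq: "normal_cone P {v} = (\<Inter>y\<in>P. {c. inner (y - v) c \<le> 0})"
    unfolding normal_cone_def by (auto simp: inner_diff_left inner_diff_right inner_commute)
  show ?thesis unfolding eq by (rule convex_INT) (rule convex_halfspace_le)
qed

lemma nc_face:
  fixes V :: "'a::euclidean_space set"
  assumes fin: "finite V" and PV: "P = convex hull V" and G: "G face_of P" and Gne: "G \<noteq> {}"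
  shows "G \<inter> V \<noteq> {}" "normal_cone P G = {c. \<forall>v\<in>G \<inter> V. \<forall>y\<in>P. inner c y \<le> inner c v}"
proof -
  have GV: "G face_of convex hull V" using G PV by simp
  obtain S' where S': "S' \<subseteq> V" "G = convex hull S'"
    by (rule face_of_convex_hull_subset[OF finite_imp_compact[OF fin] GV])
  have "S' \<noteq> {}" using S'(2) Gne by auto
  moreover have "S' \<subseteq> G" using hull_subset[of S' convex] S'(2) by simp
  ultimately show "G \<inter> V \<noteq> {}" using S'(1) by blast
  show "normal_cone P G = {c. \<forall>v\<in>G \<inter> V. \<forall>y\<in>P. inner c y \<le> inner c v}"
  proof (intro set_eqI iffI)
    fix c assume "c \<in> normal_cone P G"
    thus "c \<in> {c. \<forall>v\<in>G \<inter> V. \<forall>y\<in>P. inner c y \<le> inner c v}" unfolding normal_cone_def by blast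
  next
    fix c assume h: "c \<in> {c. \<forall>v\<in>G \<inter> V. \<forall>y\<in>P. inner c y \<le> inner c v}"
    have SG: "S' \<subseteq> G \<inter> V" using S'(1) hull_subset[of S' convex] S'(2) by simp
    have "S' \<subseteq> {x. \<forall>y\<in>P. inner c y \<le> inner c x}" using h SG by blast
    hence "convex hull S' \<subseteq> {x. \<forall>y\<in>P. inner c y \<le> inner c x}"
      by (rule hull_minimal) (rule convex_K)
    thus "c \<in> normal_cone P G" unfolding normal_cone_def using S'(2) by blast
  qed
qed

lemma Inter_in_fan:
  assumes F: "complete_fan F"
  shows "finite S \<Longrightarrow> S \<noteq> {} \<Longrightarrow> S \<subseteq> F \<Longrightarrow> \<Inter>S \<in> F"
proof (induction S rule: finite_ne_induct)
  case (singleton x) then show ?case by simp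
next
  case (insert x S)
  then show ?case using fan_Int[OF F] by simp
qed

lemma Int_regions_eq:
  assumes F: "complete_fan F" and C: "C \<in> F" and c: "c \<in> rel_interior C"
  shows "\<Inter>{Q \<in> regions F. c \<in> Q} = C"
proof (intro equalityI subsetI)
  fix y assume "y \<in> C"
  show "y \<in> \<Inter>{Q \<in> regions F. c \<in> Q}"
  proof
    fix Q assume Q: "Q \<in> {Q \<in> regions F. c \<in> Q}"
    have QF: "Q \<in> F" using Q regions_sub by blast
    have "(C \<inter> Q) \<inter> rel_interior C \<noteq> {}" using Q c rel_interior_subset by blast
    hence "C \<subseteq> C \<inter> Q" using subset_of_face_of[OF fan_face[OF F C QF] subset_refl] by blast
    thus "y \<in> Q" using \<open>y \<in> C\<close> by blast
  qed
next
  fix y assume y: "y \<in> \<Inter>{Q \<in> regions F. c \<in> Q}"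
  show "y \<in> C"
  proof (rule ccontr)
    assume yC: "y \<notin> C"
    have cC: "c \<in> C" using c rel_interior_subset by blast
    hence yc: "y \<noteq> c" using yC by blast
    hence ny: "norm (y - c) > 0" by simp
    obtain e where e: "e > 0" "\<forall>z\<in>ball c e. \<forall>Q\<in>regions F. z \<in> Q \<longrightarrow> c \<in> Q"
      using local_regions[OF F] by blast
    define t where "t = e / (2 * norm (y - c))"
    have t: "t > 0" using e(1) ny by (simp add: t_def)
    define p where "p = c - t *\<^sub>R (y - c)"
    have "norm (t *\<^sub>R (y - c)) = e / 2" using e(1) t ny by (simp add: t_def)
    hence "dist c p = e / 2" by (simp add: p_def dist_norm)
    hence pb: "p \<in> ball c e" using e(1) by simp
    obtain Q where Q: "Q \<in> regions F" "p \<in> Q" using in_some_region[OF F] by blast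
    have QF: "Q \<in> F" using Q regions_sub by blast
    have cQ: "c \<in> Q" using e(2) pb Q by blast
    have yQ: "y \<in> Q" using y Q cQ by blast
    have e1: "p + t *\<^sub>R y = (1 + t) *\<^sub>R c" unfolding p_def by (simp add: algebra_simps)
    have "1 - t / (1 + t) = 1 / (1 + t)" using t by (simp add: field_simps)
    hence "(1 - t / (1 + t)) *\<^sub>R p + (t / (1 + t)) *\<^sub>R y = (1 / (1 + t)) *\<^sub>R (p + t *\<^sub>R y)"
      by (simp add: scaleR_add_right)
    also have "\<dots> = c" using e1 t by simp
    finally have ceq: "c = (1 - t / (1 + t)) *\<^sub>R p + (t / (1 + t)) *\<^sub>R y" by simp
    have py: "p \<noteq> y"
    proof
      assume "p = y"
      hence "(1 + t) *\<^sub>R y = (1 + t) *\<^sub>R c" using e1 by (simp add: algebra_simps)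
      hence "y = c" using t by simp
      thus False using yc by simp
    qed
    have seg: "c \<in> open_segment p y"
      unfolding in_segment(2) using py ceq t
      by (intro conjI exI[of _ "t / (1 + t)"]) simp_all
    have "y \<in> Q \<inter> C" using face_ofD[OF fan_face[OF F QF C] seg Q(2) yQ] cQ cC by blast
    thus False using yC by blast
  qed
qed

lemma last_append_tl: "xs \<noteq> [] \<Longrightarrow> ys \<noteq> [] \<Longrightarrow> last xs = hd ys \<Longrightarrow> last (xs @ tl ys) = last ys"
  by (cases ys) auto

lemma walk_ne: "is_walk F W \<Longrightarrow> W \<noteq> []"
  by (simp add: is_walk_def)

lemma wd:
  assumes v0: "v0 \<in> InSpc F R0" and W1: "is_walk F W1" and W2: "is_walk F W2"
    and h1: "hd W1 = R0" and h2: "hd W2 = R0" and l: "last W1 = last W2"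
  shows "walk_map W1 v0 = walk_map W2 v0"
proof -
  have n1: "W1 \<noteq> []" and n2: "W2 \<noteq> []" using W1 W2 walk_ne by auto
  have n2': "rev W2 \<noteq> []" using n2 by simp
  have lh: "last W1 = hd (rev W2)" using l n2 by (simp add: hd_rev)
  have cw: "is_walk F (W1 @ tl (rev W2))" by (rule is_walk_append[OF W1 is_walk_rev[OF W2] lh])
  have "hd (W1 @ tl (rev W2)) = R0" using n1 h1 by simp
  moreover have "last (W1 @ tl (rev W2)) = R0"
    using last_append_tl[OF n1 n2' lh] n2 h2 by (simp add: last_rev)
  ultimately have "closed_walk_at F R0 (W1 @ tl (rev W2))" using cw by (simp add: closed_walk_at_def)
  hence "walk_map (W1 @ tl (rev W2)) v0 = v0" using v0 by (simp add: InSpc_def)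
  moreover have "walk_map (W1 @ tl (rev W2)) = walk_map (rev W2) \<circ> walk_map W1"
    by (rule walk_map_append[OF n1 n2' lh])
  ultimately have e: "walk_map (rev W2) (walk_map W1 v0) = v0" by simp
  have "walk_map (rev (rev W2)) \<circ> walk_map (rev W2) = id" by (rule walk_map_rev)
  hence "walk_map W2 (walk_map (rev W2) z) = z" for z by (metis comp_apply id_apply rev_rev_ident)
  from this[of "walk_map W1 v0"] e show ?thesis by simp
qed

definition wv :: "'a::euclidean_space set set \<Rightarrow> 'a set \<Rightarrow> 'a \<Rightarrow> 'a set \<Rightarrow> 'a" where
  "wv F R0 v0 R = walk_map (SOME W. is_walk F W \<and> hd W = R0 \<and> last W = R) v0"

lemma wv_eq:
  assumes v0: "v0 \<in> InSpc F R0" and W: "is_walk F W" "hd W = R0" "last W = R"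
  shows "wv F R0 v0 R = walk_map W v0"
proof -
  have ex: "\<exists>W. is_walk F W \<and> hd W = R0 \<and> last W = R" using W by blast
  let ?W = "SOME W. is_walk F W \<and> hd W = R0 \<and> last W = R"
  have p: "is_walk F ?W \<and> hd ?W = R0 \<and> last ?W = R" using someI_ex[OF ex] .
  have "walk_map ?W v0 = walk_map W v0"
    using wd[OF v0 _ W(1) _ W(2)] p W(3) by simp
  thus ?thesis by (simp add: wv_def)
qed

lemma wv_good:
  fixes F :: "'a::euclidean_space set set"
  assumes F: "complete_fan F" and v0: "v0 \<in> InSpc F R0"
    and H: "\<forall>R\<in>regions F. \<exists>W. is_path F W \<and> hd W = R0 \<and> last W = R \<and> walk_map W v0 \<in> interior R"
  shows "good_w F (wv F R0 v0)"
  unfolding good_w_def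
proof (intro conjI ballI allI impI)
  fix Q assume Q: "Q \<in> regions F"
  then obtain W where W: "is_path F W" "hd W = R0" "last W = Q" "walk_map W v0 \<in> interior Q"
    using H by blast
  thus "wv F R0 v0 Q \<in> interior Q" using wv_eq[OF v0, of W Q] by (simp add: is_path_def)
next
  fix Q Q' assume adj: "adjacent F Q Q'"
  have Q: "Q \<in> regions F" using adj by (simp add: adjacent_def)
  then obtain W where W: "is_path F W" "hd W = R0" "last W = Q"
    using H by blast
  have Wk: "is_walk F W" using W(1) by (simp add: is_path_def)
  have nW: "W \<noteq> []" using Wk walk_ne by blast
  have e2: "is_walk F [Q, Q']" using adj by (simp add: is_walk_cons2 is_walk_single adjacent_def)
  have lh: "last W = hd [Q, Q']" using W(3) by simp
  have Wk2: "is_walk F (W @ tl [Q, Q'])" by (rule is_walk_append[OF Wk e2 lh])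
  have "hd (W @ tl [Q, Q']) = R0" using nW W(2) by simp
  moreover have "last (W @ tl [Q, Q']) = Q'" by simp
  ultimately have "wv F R0 v0 Q' = walk_map (W @ tl [Q, Q']) v0" using wv_eq[OF v0 Wk2] by simp
  also have "\<dots> = walk_map [Q, Q'] (walk_map W v0)"
    using walk_map_append[OF nW _ lh] by simp
  also have "walk_map W v0 = wv F R0 v0 Q" using wv_eq[OF v0 Wk W(2,3)] by simp
  finally show "wall_reflection Q' Q (wv F R0 v0 Q) = wv F R0 v0 Q'" by simp
qed

lemma wv_norm:
  assumes v0: "v0 \<in> InSpc F R0" and H: "\<exists>W. is_walk F W \<and> hd W = R0 \<and> last W = R"
  shows "norm (wv F R0 v0 R) = norm v0"
  using H wv_eq[OF v0] walk_map_norm by metis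

lemma reverse_dir:
  fixes F :: "'a::euclidean_space set set"
  assumes F: "complete_fan F" and v0: "v0 \<in> InSpc F R0"
    and H: "\<forall>R\<in>regions F. \<exists>W. is_path F W \<and> hd W = R0 \<and> last W = R \<and> walk_map W v0 \<in> interior R"
  shows "inscribable F"
proof -
  define w where "w = wv F R0 v0"
  have g: "good_w F w" unfolding w_def by (rule wv_good[OF F v0 H])
  have wint: "\<And>R. R \<in> regions F \<Longrightarrow> w R \<in> interior R" using g by (simp add: good_w_def)
  define V where "V = w ` regions F"
  define P where "P = convex hull V"
  have finV: "finite V" unfolding V_def using finite_regions[OF F] by simp
  have VP: "V \<subseteq> P" unfolding P_def by (rule hull_subset)
  have wP: "\<And>R. R \<in> regions F \<Longrightarrow> w R \<in> P" using VP V_def by blast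
  have convP: "convex P" unfolding P_def by (rule convex_convex_hull)
  have mem: "c \<in> normal_cone P {w R} \<longleftrightarrow> (\<forall>S\<in>regions F. inner c (w S) \<le> inner c (w R))"
    if R: "R \<in> regions F" for R c
    using nc_vertex[OF P_def wP[OF R]] unfolding V_def by blast
  have NR: "normal_cone P {w R} = R" if R: "R \<in> regions F" for R
  proof -
    have RF: "R \<in> F" using R regions_sub by blast
    let ?N = "normal_cone P {w R}"
    have RN: "R \<subseteq> ?N"
    proof
      fix c assume c: "c \<in> R"
      have "\<forall>S\<in>regions F. inner c (w S) \<le> inner c (w R)"
        using max_lemma[OF F g R c] by (simp add: inner_commute)
      thus "c \<in> ?N" using mem[OF R] by blast
    qed
    have intN: "interior ?N \<subseteq> R"
    proof
      fix y assume y: "y \<in> interior ?N"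
      obtain e where e: "e > 0" "ball y e \<subseteq> ?N" using y mem_interior by blast
      obtain S where S: "S \<in> regions F" "y \<in> S" using in_some_region[OF F] by blast
      show "y \<in> R"
      proof (rule ccontr)
        assume yR: "y \<notin> R"
        hence SR: "S \<noteq> R" using S by blast
        have "y \<in> ball y e" using e(1) by simp
        hence yN: "y \<in> ?N" using e(2) by blast
        have le1: "inner y (w S) \<le> inner y (w R)" using yN mem[OF R] S by blast
        have le2: "inner (w R) y \<le> inner (w S) y" by (rule max_lemma[OF F g S(1) S(2) R])
        define d where "d = w S - w R"
        have d0: "d \<noteq> 0"
        proof
          assume "d = 0"
          hence "w S = w R" by (simp add: d_def)
          hence "w S \<in> interior S \<inter> R" using wint[OF S(1)] wint[OF R] interior_subset by force
          thus False using region_interior_disj[OF F S(1) R SR] by blast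
        qed
        have yd: "inner y d = 0" using le1 le2 by (simp add: d_def inner_diff_right inner_commute)
        define z where "z = y + (e / 2 / norm d) *\<^sub>R d"
        have nd: "norm d > 0" using d0 by simp
        have "norm ((e / 2 / norm d) *\<^sub>R d) = e / 2" using nd e(1) by simp
        hence "dist y z = e / 2" by (simp add: z_def dist_norm)
        hence "z \<in> ball y e" using e(1) by simp
        hence "z \<in> ?N" using e(2) by blast
        hence "inner z (w S) \<le> inner z (w R)" using mem[OF R] S by blast
        hence zd: "inner z d \<le> 0" by (simp add: d_def inner_diff_right)
        have "inner z d = inner y d + (e / 2 / norm d) * inner d d" by (simp add: z_def inner_add_left)
        moreover have "(e / 2 / norm d) * inner d d > 0" using nd e(1) d0 by simp
        ultimately show False using zd yd by linarith
      qed
    qed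
    have convN: "convex ?N" by (rule convex_normal_cone)
    have "interior R \<subseteq> interior ?N" using RN by (rule interior_mono)
    hence intne: "interior ?N \<noteq> {}" using region_interior[OF F R] by blast
    have "?N \<subseteq> closure ?N" by (rule closure_subset)
    also have "\<dots> = closure (interior ?N)" using convex_closure_interior[OF convN intne] by simp
    also have "\<dots> \<subseteq> closure R" using intN by (rule closure_mono)
    also have "\<dots> = R" using fan_facts(2)[OF F RF] by simp
    finally show ?thesis using RN by blast
  qed
  have norms: "norm (w R) = norm v0" if R: "R \<in> regions F" for R
  proof -
    obtain W where "is_path F W" "hd W = R0" "last W = R" using H R by blast
    hence "\<exists>W. is_walk F W \<and> hd W = R0 \<and> last W = R" by (auto simp: is_path_def)
    thus ?thesis unfolding w_def by (rule wv_norm[OF v0])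
  qed
  have insc: "inscribed_polytope P"
    unfolding inscribed_polytope_def
  proof (intro conjI exI)
    show "polytope P" unfolding P_def by (rule polytope_convex_hull[OF finV])
    show "{v. v extreme_point_of P} \<subseteq> sphere 0 (norm v0)"
    proof
      fix x assume "x \<in> {v. v extreme_point_of P}"
      hence "x \<in> V" unfolding P_def using extreme_point_of_convex_hull by blast
      then obtain R where "R \<in> regions F" "x = w R" unfolding V_def by blast
      thus "x \<in> sphere 0 (norm v0)" using norms by simp
    qed
  qed
  have NG: "normal_cone P G = \<Inter>{R \<in> regions F. w R \<in> G} \<and> {R \<in> regions F. w R \<in> G} \<noteq> {}"
    if G: "G face_of P" "G \<noteq> {}" for G
  proof
    have ne: "G \<inter> V \<noteq> {}" and eq: "normal_cone P G = {c. \<forall>v\<in>G \<inter> V. \<forall>y\<in>P. inner c y \<le> inner c v}"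
      using nc_face[OF finV P_def G] by blast+
    show "{R \<in> regions F. w R \<in> G} \<noteq> {}" using ne unfolding V_def by blast
    show "normal_cone P G = \<Inter>{R \<in> regions F. w R \<in> G}"
      unfolding eq
    proof (intro equalityI subsetI)
      fix c assume c: "c \<in> {c. \<forall>v\<in>G \<inter> V. \<forall>y\<in>P. inner c y \<le> inner c v}"
      show "c \<in> \<Inter>{R \<in> regions F. w R \<in> G}"
      proof
        fix R assume R: "R \<in> {R \<in> regions F. w R \<in> G}"
        hence "w R \<in> G \<inter> V" unfolding V_def by blast
        hence "c \<in> normal_cone P {w R}" using c unfolding normal_cone_def by simp
        thus "c \<in> R" using NR R by blast
      qed
    next
      fix c assume c: "c \<in> \<Inter>{R \<in> regions F. w R \<in> G}"
      show "c \<in> {c. \<forall>v\<in>G \<inter> V. \<forall>y\<in>P. inner c y \<le> inner c v}"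
      proof (intro CollectI ballI)
        fix v y assume v: "v \<in> G \<inter> V" and y: "y \<in> P"
        then obtain R where R: "R \<in> regions F" "v = w R" unfolding V_def by blast
        hence "c \<in> R" using c v by blast
        hence "c \<in> normal_cone P {w R}" using NR[OF R(1)] by simp
        thus "inner c y \<le> inner c v" using y R(2) unfolding normal_cone_def by simp
      qed
    qed
  qed
  have "normal_fan P = F"
  proof (intro equalityI subsetI)
    fix X assume "X \<in> normal_fan P"
    then obtain G where G: "G face_of P" "G \<noteq> {}" "X = normal_cone P G"
      unfolding normal_fan_def by blast
    have "\<Inter>{R \<in> regions F. w R \<in> G} \<in> F"
      using NG[OF G(1,2)] finite_regions[OF F] regions_sub
      by (intro Inter_in_fan[OF F]) auto
    thus "X \<in> F" using NG[OF G(1,2)] G(3) by simp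
  next
    fix C assume C: "C \<in> F"
    have "C \<noteq> {}" using fan_facts(4)[OF F C] by blast
    then obtain c where c: "c \<in> rel_interior C" using rel_interior_eq_empty fan_facts(1)[OF F C] by blast
    obtain Q0 where Q0: "Q0 \<in> regions F" "c \<in> Q0" using in_some_region[OF F] by blast
    define m where "m = inner c (w Q0)"
    have cN0: "c \<in> normal_cone P {w Q0}" using NR[OF Q0(1)] Q0(2) by simp
    have Pm: "\<And>y. y \<in> P \<Longrightarrow> inner c y \<le> m" using cN0 unfolding normal_cone_def m_def by simp
    define G where "G = P \<inter> {x. inner c x = m}"
    have Gface: "G face_of P" unfolding G_def by (rule face_of_Int_supporting_hyperplane_le[OF convP Pm])
    have Gne: "G \<noteq> {}" using wP[OF Q0(1)] unfolding G_def m_def by blast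
    have key: "w R \<in> G \<longleftrightarrow> c \<in> R" if R: "R \<in> regions F" for R
    proof
      assume "w R \<in> G"
      hence "inner c (w R) = m" unfolding G_def by simp
      hence "\<forall>y\<in>P. inner c y \<le> inner c (w R)" using Pm by simp
      hence "c \<in> normal_cone P {w R}" unfolding normal_cone_def by simp
      thus "c \<in> R" using NR[OF R] by simp
    next
      assume "c \<in> R"
      hence "c \<in> normal_cone P {w R}" using NR[OF R] by simp
      hence "inner c (w Q0) \<le> inner c (w R)" using wP[OF Q0(1)] unfolding normal_cone_def by simp
      moreover have "inner c (w R) \<le> m" using Pm wP[OF R] by blast
      ultimately have "inner c (w R) = m" unfolding m_def by simp
      thus "w R \<in> G" unfolding G_def using wP[OF R] by simp
    qed
    have "{R \<in> regions F. w R \<in> G} = {R \<in> regions F. c \<in> R}" using key by blast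
    hence "normal_cone P G = C" using NG[OF Gface Gne] Int_regions_eq[OF F C c] by simp
    thus "C \<in> normal_fan P" unfolding normal_fan_def using Gface Gne by blast
  qed
  thus ?thesis unfolding inscribable_def using insc by blast
qed

lemma center_exists:
  fixes V :: "'a::euclidean_space set"
  assumes sph: "V \<subseteq> sphere c r" and v1: "v1 \<in> V"
  shows "\<exists>c'. (\<forall>v\<in>V. norm (v - c') = norm (v1 - c'))
          \<and> (\<forall>x. (\<forall>v\<in>V. inner x v = inner x v1) \<longrightarrow> (\<forall>v\<in>V. inner x (v - c') = 0))"
proof -
  let ?S = "(\<lambda>v. v - v1) ` V"
  obtain y z where y: "y \<in> span ?S" and z: "\<And>w. w \<in> span ?S \<Longrightarrow> orthogonal z w"
      and cz: "c - v1 = y + z"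
    using orthogonal_subspace_decomp_exists by blast
  define c' where "c' = v1 + y"
  have sq: "norm (v - c') ^ 2 = r ^ 2 - norm z ^ 2" if v: "v \<in> V" for v
  proof -
    have "v - v1 \<in> span ?S" using v by (simp add: span_base)
    hence inS: "v - c' \<in> span ?S" using y by (simp add: c'_def span_diff diff_diff_eq[symmetric])
    hence oz: "inner z (v - c') = 0" using z orthogonal_def by blast
    have vc: "v - c = (v - c') - z" using cz by (simp add: c'_def algebra_simps)
    have "v \<in> sphere c r" using sph v by blast
    hence "norm (c - v) = r" by (simp add: dist_norm)
    hence "norm (v - c) = r" by (simp add: norm_minus_commute)
    hence "r ^ 2 = norm ((v - c') - z) ^ 2" using vc by simp
    also have "\<dots> = norm (v - c') ^ 2 + norm z ^ 2"
      using oz by (simp add: power2_norm_eq_inner inner_diff_left inner_diff_right inner_commute)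
    finally show ?thesis by simp
  qed
  have p1: "\<forall>v\<in>V. norm (v - c') = norm (v1 - c')"
  proof
    fix v assume "v \<in> V"
    hence "norm (v - c') ^ 2 = norm (v1 - c') ^ 2" using sq v1 by simp
    thus "norm (v - c') = norm (v1 - c')" by (simp add: power2_eq_iff_nonneg)
  qed
  have p2: "\<forall>v\<in>V. inner x (v - c') = 0" if hx: "\<forall>v\<in>V. inner x v = inner x v1" for x
  proof
    fix v assume v: "v \<in> V"
    have "?S \<subseteq> {u. inner x u = 0}" using hx by (auto simp: inner_diff_right)
    hence "span ?S \<subseteq> {u. inner x u = 0}" by (rule span_minimal[OF _ subspace_hyperplane])
    hence xy: "inner x y = 0" using y by blast
    have "inner x (v - c') = inner x v - inner x v1 - inner x y"
      by (simp add: c'_def inner_diff_right inner_add_right)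
    thus "inner x (v - c') = 0" using hx v xy by simp
  qed
  show ?thesis using p1 p2 by blast
qed

lemma forward_dir:
  fixes F :: "'a::euclidean_space set set"
  assumes F: "complete_fan F" and R0: "R0 \<in> regions F" and lin: "lineal F \<noteq> UNIV"
    and ins: "inscribable F"
  shows "virtually_inscribable F R0 \<and>
         (\<exists>v0\<in>InSpc F R0. \<forall>R\<in>regions F. \<exists>W.
             is_path F W \<and> hd W = R0 \<and> last W = R \<and> walk_map W v0 \<in> interior R)"
proof -
  obtain P where insP: "inscribed_polytope P" and NF: "normal_fan P = F"
    using ins unfolding inscribable_def by blast
  have polyP: "polytope P" using insP by (simp add: inscribed_polytope_def)
  obtain c r where sph: "{v. v extreme_point_of P} \<subseteq> sphere c r"
    using insP unfolding inscribed_polytope_def by blast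
  define V where "V = {v. v extreme_point_of P}"
  have finV: "finite V" unfolding V_def
    by (rule finite_polyhedron_extreme_points[OF polytope_imp_polyhedron[OF polyP]])
  have convP: "convex P" by (rule polytope_imp_convex[OF polyP])
  have PV: "P = convex hull V" unfolding V_def
    by (rule Krein_Milman_Minkowski[OF polytope_imp_compact[OF polyP] convP])
  have VP: "V \<subseteq> P" unfolding V_def using extreme_point_of_def by blast
  have "F \<noteq> {}" using F by (simp add: complete_fan_def is_fan_def)
  then obtain G0 where "G0 face_of P" "G0 \<noteq> {}" using NF unfolding normal_fan_def by blast
  hence Pne: "P \<noteq> {}" using face_of_imp_subset by blast
  hence Vne: "V \<noteq> {}" using PV by auto
  then obtain v1 where v1: "v1 \<in> V" by blast
  obtain c' where eqn: "\<forall>v\<in>V. norm (v - c') = norm (v1 - c')"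
      and orth: "\<And>x. (\<forall>v\<in>V. inner x v = inner x v1) \<Longrightarrow> (\<forall>v\<in>V. inner x (v - c') = 0)"
    using center_exists[OF sph[folded V_def] v1] by blast
  define w where "w v = v - c'" for v
  have wn: "\<And>v u. v \<in> V \<Longrightarrow> u \<in> V \<Longrightarrow> norm (w v) = norm (w u)" using eqn by (simp add: w_def)
  have strict: "inner (w v) u < inner (w v) v" if v: "v \<in> V" and u: "u \<in> V" and vu: "v \<noteq> u" for v u
  proof -
    have nn: "norm (w v) = norm (w u)" by (rule wn[OF v u])
    have d: "v - u = w v - w u" by (simp add: w_def)
    have ii: "inner (w v) (w v) = inner (w u) (w u)" using nn by (metis power2_norm_eq_inner)
    have "norm (w v - w u) ^ 2 = norm (w v) ^ 2 - 2 * inner (w v) (w u) + norm (w u) ^ 2"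
      by (simp add: power2_norm_eq_inner inner_diff_left inner_diff_right inner_commute)
    also have "norm (w v) ^ 2 - 2 * inner (w v) (w u) + norm (w u) ^ 2 = 2 * inner (w v) (w v - w u)"
      using ii by (simp add: power2_norm_eq_inner inner_diff_right)
    finally have "2 * inner (w v) (v - u) = norm (v - u) ^ 2" using d by simp
    moreover have "norm (v - u) ^ 2 > 0" using vu by simp
    ultimately have "inner (w v) (v - u) > 0" by linarith
    thus ?thesis by (simp add: inner_diff_right)
  qed
  define N where "N v = normal_cone P {v}" for v
  have memN: "x \<in> N v \<longleftrightarrow> (\<forall>u\<in>V. inner x u \<le> inner x v)" if v: "v \<in> V" for v x
    unfolding N_def using nc_vertex[OF PV] VP v by blast
  have wint: "w v \<in> interior (N v)" if v: "v \<in> V" for v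
  proof -
    let ?O = "\<Inter>u\<in>V - {v}. {x. inner (u - v) x < 0}"
    have oO: "open ?O" using finV by (intro open_INT) (auto intro: open_halfspace_lt)
    have inO: "w v \<in> ?O"
    proof (rule INT_I)
      fix u assume u: "u \<in> V - {v}"
      hence "inner (w v) u < inner (w v) v" using strict[OF v] by blast
      hence "inner u (w v) < inner v (w v)" by (simp add: inner_commute)
      thus "w v \<in> {x. inner (u - v) x < 0}" by (simp add: inner_diff_left)
    qed
    have "?O \<subseteq> N v"
    proof
      fix x assume x: "x \<in> ?O"
      have "\<forall>u\<in>V. inner x u \<le> inner x v"
      proof
        fix u assume u: "u \<in> V"
        show "inner x u \<le> inner x v"
        proof (cases "u = v")
          case False
          hence "inner (u - v) x < 0" using x u by blast
          hence "inner u x < inner v x" by (simp add: inner_diff_left)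
          thus ?thesis by (simp add: inner_commute)
        qed simp
      qed
      thus "x \<in> N v" using memN[OF v] by blast
    qed
    thus ?thesis using interior_maximal[OF _ oO] inO by blast
  qed
  have NF_in: "N v \<in> F" if v: "v \<in> V" for v
  proof -
    have "{v} face_of P" using v unfolding V_def by (simp add: face_of_singleton)
    thus ?thesis unfolding N_def NF[symmetric] normal_fan_def by blast
  qed
  have Nuniq: "u = v" if u: "u \<in> V" and v: "v \<in> V" and wv: "w v \<in> N u" for u v
  proof (rule ccontr)
    assume "u \<noteq> v"
    hence "inner (w v) u < inner (w v) v" using strict[OF v u] by metis
    moreover have "inner (w v) v \<le> inner (w v) u" using wv memN[OF u] v by blast
    ultimately show False by simp
  qed
  have Fcone: "\<exists>G. G face_of P \<and> G \<noteq> {} \<and> C = normal_cone P G" if C: "C \<in> F" for C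
    using C unfolding NF[symmetric] normal_fan_def by blast
  have Gvert: "\<exists>u\<in>V. u \<in> G \<and> normal_cone P G \<subseteq> N u" if G: "G face_of P" "G \<noteq> {}" for G
  proof -
    have "G \<inter> V \<noteq> {}" using nc_face(1)[OF finV PV G] .
    then obtain u where u: "u \<in> V" "u \<in> G" by blast
    have "normal_cone P G \<subseteq> N u" unfolding N_def normal_cone_def using u(2) by blast
    thus ?thesis using u by blast
  qed
  have reg1: "N v \<in> regions F" if v: "v \<in> V" for v
    unfolding regions_def
  proof (intro CollectI conjI ballI impI)
    show "N v \<in> F" by (rule NF_in[OF v])
    fix C assume C: "C \<in> F" and sub: "N v \<subseteq> C"
    obtain G where G: "G face_of P" "G \<noteq> {}" "C = normal_cone P G" using Fcone[OF C] by blast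
    obtain u where u: "u \<in> V" "normal_cone P G \<subseteq> N u" using Gvert[OF G(1,2)] by blast
    have "w v \<in> N v" using wint[OF v] interior_subset by blast
    hence "w v \<in> N u" using sub G(3) u(2) by blast
    hence "u = v" by (rule Nuniq[OF u(1) v])
    thus "C = N v" using sub G(3) u(2) by blast
  qed
  have reg2: "\<exists>v\<in>V. R = N v" if R: "R \<in> regions F" for R
  proof -
    have RF: "R \<in> F" using R regions_sub by blast
    obtain G where G: "G face_of P" "G \<noteq> {}" "R = normal_cone P G" using Fcone[OF RF] by blast
    obtain u where u: "u \<in> V" "normal_cone P G \<subseteq> N u" using Gvert[OF G(1,2)] by blast
    have "N u = R" using region_max[OF R NF_in[OF u(1)]] u(2) G(3) by blast
    thus ?thesis using u(1) by metis
  qed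
  define vert where "vert R = (SOME v. v \<in> V \<and> R = N v)" for R
  have vert: "vert R \<in> V \<and> R = N (vert R)" if R: "R \<in> regions F" for R
    unfolding vert_def using someI_ex[OF reg2[OF R, unfolded Bex_def]] .
  define wR where "wR R = w (vert R)" for R
  have good: "good_w F wR"
    unfolding good_w_def
  proof (intro conjI ballI allI impI)
    fix Q assume Q: "Q \<in> regions F"
    show "wR Q \<in> interior Q" using wint vert[OF Q] unfolding wR_def by metis
  next
    fix Q Q' assume adj: "adjacent F Q Q'"
    have Q: "Q \<in> regions F" and Q': "Q' \<in> regions F" and wall: "is_wall (Q \<inter> Q')"
      using adj by (simp_all add: adjacent_def)
    define v where "v = vert Q"
    define u where "u = vert Q'"
    have v: "v \<in> V" "Q = N v" using vert[OF Q] v_def by auto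
    have u: "u \<in> V" "Q' = N u" using vert[OF Q'] u_def by auto
    have "Q \<noteq> Q'" by (rule adjacent_neq[OF F adj])
    hence vu: "v \<noteq> u" using v u by metis
    define a where "a = v - u"
    have a0: "a \<noteq> 0" using vu by (simp add: a_def)
    have hyp: "Q' \<inter> Q \<subseteq> {x. inner a x = 0}"
    proof
      fix x assume x: "x \<in> Q' \<inter> Q"
      have "inner x v \<le> inner x u" using x u memN[OF u(1)] v(1) by blast
      moreover have "inner x u \<le> inner x v" using x v memN[OF v(1)] u(1) by blast
      ultimately have "inner v x = inner u x" by (simp add: inner_commute)
      thus "x \<in> {x. inner a x = 0}" by (simp add: a_def inner_diff_left)
    qed
    have QF: "Q \<in> F" and Q'F: "Q' \<in> F" using Q Q' regions_sub by auto
    have z0: "0 \<in> Q' \<inter> Q" using fan_facts(4)[OF F QF] fan_facts(4)[OF F Q'F] by blast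
    have dim: "aff_dim (Q' \<inter> Q) = int DIM('a) - 1" using wall by (simp add: is_wall_def Int_commute)
    have sp: "span (Q' \<inter> Q) = {x. inner a x = 0}" by (rule span_hyperplane[OF z0 dim a0 hyp])
    have aw: "a = w v - w u" by (simp add: a_def w_def)
    have nn: "norm (w v) = norm (w u)" by (rule wn[OF v(1) u(1)])
    have "reflect {x. inner a x = 0} (w v) = w u"
    proof (rule reflect_unique[OF subspace_hyperplane])
      have "inner a (w v + w u) = norm (w v) ^ 2 - norm (w u) ^ 2"
        unfolding aw by (simp add: power2_norm_eq_inner inner_diff_left inner_diff_right inner_add_right inner_commute)
      thus "(1/2) *\<^sub>R (w v + w u) \<in> {x. inner a x = 0}" using nn by simp
      show "\<forall>z\<in>{x. inner a x = 0}. inner (w v - w u) z = 0" using aw by simp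
    qed
    thus "wall_reflection Q' Q (wR Q) = wR Q'"
      unfolding wall_reflection_def sp wR_def using v_def u_def by simp
  qed
  define v0 where "v0 = wR R0"
  have walkv: "walk_map W v0 = wR (last W)" if "is_walk F W" "hd W = R0" for W
    using walk_good[OF good that(1)] that(2) by (simp add: v0_def)
  have lin_orth: "inner x v0 = 0" if x: "x \<in> lineal F" for x
  proof -
    have PP: "P face_of P" by (rule face_of_refl[OF convP])
    have "normal_cone P P \<in> F" unfolding NF[symmetric] normal_fan_def using PP Pne by blast
    hence "x \<in> lineality (normal_cone P P)" using x unfolding lineal_def by blast
    hence xs: "x \<in> normal_cone P P" "- x \<in> normal_cone P P" unfolding lineality_def by auto
    have "\<forall>v\<in>V. inner x v = inner x v1"
    proof
      fix v assume v: "v \<in> V"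
      have "inner x v \<le> inner x v1" using xs(1) v v1 VP unfolding normal_cone_def by blast
      moreover have "inner (- x) v \<le> inner (- x) v1" using xs(2) v v1 VP unfolding normal_cone_def by blast
      ultimately show "inner x v = inner x v1" by simp
    qed
    hence "\<forall>v\<in>V. inner x (v - c') = 0" by (rule orth)
    moreover have "vert R0 \<in> V" using vert[OF R0] by blast
    ultimately show ?thesis by (simp add: v0_def wR_def w_def)
  qed
  have inspc: "v0 \<in> InSpc F R0"
    unfolding InSpc_def orthogonal_comp_def
  proof (intro CollectI conjI allI impI ballI)
    fix x assume "x \<in> lineal F"
    thus "orthogonal x v0" using lin_orth by (simp add: orthogonal_def)
  next
    fix W assume "closed_walk_at F R0 W"
    hence "is_walk F W" "hd W = R0" "last W = R0" by (simp_all add: closed_walk_at_def)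
    thus "walk_map W v0 = v0" using walkv by (simp add: v0_def)
  qed
  have v0int: "v0 \<in> interior R0" using good R0 by (simp add: good_w_def v0_def)
  have vi: "virtually_inscribable F R0"
    unfolding virtually_inscribable_def
  proof (intro exI conjI allI impI)
    show "v0 \<notin> lineal F"
    proof
      assume "v0 \<in> lineal F"
      hence "inner v0 v0 = 0" by (rule lin_orth)
      hence "v0 = 0" by simp
      hence "lineal F = UNIV" using lineal_UNIV[OF F R0] v0int by simp
      thus False using lin by simp
    qed
    fix W assume "closed_walk_at F R0 W"
    thus "walk_map W v0 = v0" using inspc by (simp add: InSpc_def)
  qed
  have "\<forall>R\<in>regions F. \<exists>W. is_path F W \<and> hd W = R0 \<and> last W = R \<and> walk_map W v0 \<in> interior R"
  proof
    fix R assume R: "R \<in> regions F"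
    obtain W where W: "is_path F W" "hd W = R0" "last W = R" using path_lemma[OF F good R R0] by blast
    have "walk_map W v0 = wR R" using walkv W by (simp add: is_path_def)
    moreover have "wR R \<in> interior R" using good R by (simp add: good_w_def)
    ultimately show "\<exists>W. is_path F W \<and> hd W = R0 \<and> last W = R \<and> walk_map W v0 \<in> interior R"
      using W by metis
  qed
  thus ?thesis using vi inspc by blast
qed

theorem proposition2p7:
  fixes F :: "'a::euclidean_space set set" and R0 :: "'a set"
  assumes "complete_fan F"
    and "R0 \<in> regions F"
    and "lineal F \<noteq> UNIV"
  shows "inscribable F \<longleftrightarrow>
           (virtually_inscribable F R0 \<and>
            (\<exists>v0\<in>InSpc F R0. \<forall>R\<in>regions F. \<exists>W.
                is_path F W \<and> hd W = R0 \<and> last W = R \<and> walk_map W v0 \<in> interior R))"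
proof
  assume "inscribable F"
  thus "virtually_inscribable F R0 \<and>
           (\<exists>v0\<in>InSpc F R0. \<forall>R\<in>regions F. \<exists>W.
                is_path F W \<and> hd W = R0 \<and> last W = R \<and> walk_map W v0 \<in> interior R)"
    by (rule forward_dir[OF assms(1,2,3)])
next
  assume "virtually_inscribable F R0 \<and>
           (\<exists>v0\<in>InSpc F R0. \<forall>R\<in>regions F. \<exists>W.
                is_path F W \<and> hd W = R0 \<and> last W = R \<and> walk_map W v0 \<in> interior R)"
  then obtain v0 where v0: "v0 \<in> InSpc F R0"
    and H: "\<forall>R\<in>regions F. \<exists>W. is_path F W \<and> hd W = R0 \<and> last W = R \<and> walk_map W v0 \<in> interior R"
    by blast
  show "inscribable F" by (rule reverse_dir[OF assms(1) v0 H])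
qed

end
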